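(* Let $n\ge2$, let $u$ be a polar $n$-complex number and $m$ an integer; if $m\le0$ assume $v_+\ne0$, $v_-\ne0$ (for even $n$) and $\rho_k\ne0$ for all $k$. Then, for even $n$, $$u^m=e_+v_+^m+e_-v_-^m+\sum_{k=1}^{n/2-1}\rho_k^m\big(e_k\cos m\phi_k+\tilde e_k\sin m\phi_k\big),$$ and for odd $n$, $$u^m=e_+v_+^m+\sum_{k=1}^{(n-1)/2}\rho_k^m\big(e_k\cos m\phi_k+\tilde e_k\sin m\phi_k\big),$$ where a term with $\rho_k=0$ (possible only for $m\ge1$) is interpreted as $0$.
   Context: Polar $n$-complex numbers: $u=x_0+h_1x_1+\cdots+h_{n-1}x_{n-1}$, $x_j\in\mathbb{R}$, $h_0=1$, componentwise addition, bilinear multiplication $h_jh_k=h_{(j+k)\bmod n}$. Canonical variables: $v_+=\sum_px_p$; for even $n$, $v_-=\sum_p(-1)^px_p$; for $k=1,\dots,\lfloor(n-1)/2\rfloor$, $v_k=\sum_px_p\cos(2\pi kp/n)$, $\tilde v_k=\sum_px_p\sin(2\pi kp/n)$, $\rho_k=\sqrt{v_k^2+\tilde v_k^2}$, and for $\rho_k>0$, $\phi_k$ with $\cos\phi_k=v_k/\rho_k$, $\sin\phi_k=\tilde v_k/\rho_k$. Canonical base: $e_+=\frac1n\sum_ph_p$, $e_-=\frac1n\sum_p(-1)^ph_p$ (even $n$), $e_k=\frac2n\sum_p\cos(2\pi kp/n)h_p$, $\tilde e_k=\frac2n\sum_p\sin(2\pi kp/n)h_p$. *)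

theory Defs
  imports "HOL-Analysis.Analysis"
begin

text \<open>A polar n-complex number x_0 + h_1 x_1 + ... + h_(n-1) x_(n-1) is represented by its
  coefficient function u :: nat => real, with u p = x_p for p < n and u p = 0 for p >= n.\<close>

definition pc_valid :: "nat \<Rightarrow> (nat \<Rightarrow> real) \<Rightarrow> bool" where
  "pc_valid n u \<longleftrightarrow> (\<forall>j\<ge>n. u j = 0)"

text \<open>Multiplication induced by h_j h_k = h_((j+k) mod n).\<close>
definition pc_mult :: "nat \<Rightarrow> (nat \<Rightarrow> real) \<Rightarrow> (nat \<Rightarrow> real) \<Rightarrow> (nat \<Rightarrow> real)" where
  "pc_mult n u w = (\<lambda>j. if j < n then
      (\<Sum>p<n. \<Sum>q<n. if (p + q) mod n = j then u p * w q else 0) else 0)"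

definition pc_one :: "nat \<Rightarrow> (nat \<Rightarrow> real)" where
  "pc_one n = (\<lambda>j. if j = 0 \<and> 0 < n then 1 else 0)"

fun pc_pow :: "nat \<Rightarrow> (nat \<Rightarrow> real) \<Rightarrow> nat \<Rightarrow> (nat \<Rightarrow> real)" where
  "pc_pow n u 0 = pc_one n"
| "pc_pow n u (Suc k) = pc_mult n u (pc_pow n u k)"

definition pc_inv :: "nat \<Rightarrow> (nat \<Rightarrow> real) \<Rightarrow> (nat \<Rightarrow> real)" where
  "pc_inv n u = (THE w. pc_valid n w \<and> pc_mult n u w = pc_one n)"

definition pc_ipow :: "nat \<Rightarrow> (nat \<Rightarrow> real) \<Rightarrow> int \<Rightarrow> (nat \<Rightarrow> real)" where
  "pc_ipow n u m = (if 0 \<le> m then pc_pow n u (nat m) else pc_pow n (pc_inv n u) (nat (- m)))"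

definition v_plus :: "nat \<Rightarrow> (nat \<Rightarrow> real) \<Rightarrow> real" where
  "v_plus n u = (\<Sum>p<n. u p)"

definition v_minus :: "nat \<Rightarrow> (nat \<Rightarrow> real) \<Rightarrow> real" where
  "v_minus n u = (\<Sum>p<n. (-1) ^ p * u p)"

definition v_c :: "nat \<Rightarrow> nat \<Rightarrow> (nat \<Rightarrow> real) \<Rightarrow> real" where
  "v_c n k u = (\<Sum>p<n. u p * cos (2 * pi * real k * real p / real n))"

definition v_s :: "nat \<Rightarrow> nat \<Rightarrow> (nat \<Rightarrow> real) \<Rightarrow> real" where
  "v_s n k u = (\<Sum>p<n. u p * sin (2 * pi * real k * real p / real n))"

definition rho :: "nat \<Rightarrow> nat \<Rightarrow> (nat \<Rightarrow> real) \<Rightarrow> real" where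
  "rho n k u = sqrt ((v_c n k u)\<^sup>2 + (v_s n k u)\<^sup>2)"

text \<open>Azimuthal angle: for rho > 0, cos phi = v_k / rho, sin phi = tilde v_k / rho.
  (For rho = 0 the value is irrelevant; Arg 0 = 0.)\<close>
definition phi :: "nat \<Rightarrow> nat \<Rightarrow> (nat \<Rightarrow> real) \<Rightarrow> real" where
  "phi n k u = Arg (Complex (v_c n k u) (v_s n k u))"

definition e_plus :: "nat \<Rightarrow> (nat \<Rightarrow> real)" where
  "e_plus n = (\<lambda>j. if j < n then 1 / real n else 0)"

definition e_minus :: "nat \<Rightarrow> (nat \<Rightarrow> real)" where
  "e_minus n = (\<lambda>j. if j < n then (-1) ^ j / real n else 0)"

definition e_c :: "nat \<Rightarrow> nat \<Rightarrow> (nat \<Rightarrow> real)" where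
  "e_c n k = (\<lambda>j. if j < n then 2 / real n * cos (2 * pi * real k * real j / real n) else 0)"

definition e_s :: "nat \<Rightarrow> nat \<Rightarrow> (nat \<Rightarrow> real)" where
  "e_s n k = (\<lambda>j. if j < n then 2 / real n * sin (2 * pi * real k * real j / real n) else 0)"

end

theory Submission
  imports Defs
begin

definition chi :: "nat \<Rightarrow> int \<Rightarrow> (nat \<Rightarrow> real) \<Rightarrow> complex" where
  "chi n k x = (\<Sum>p<n. of_real (x p) * cis (2 * pi *  of_int k* of_nat p/of_nat n))"

lemma orth:
  assumes "n > 0"
  shows "(\<Sum>k<n. cis (2 * pi *  of_nat k* of_int d/of_nat n)) = (if int n dvd d then of_nat n else 0)"
proof -
  define z where "z = cis (2 * pi *  of_int d/of_nat n)"
  have zk: "cis (2 * pi *  of_nat k* of_int d/of_nat n) = z^k" for k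
    unfolding z_def Complex.DeMoivre by (rule arg_cong[where f=cis]) (simp add: field_simps)
  show ?thesis
  proof (cases "int n dvd d")
    case True
    then obtain e where e: "d = int n * e" by blast
    have "z = cis (2 * pi * of_int e)" unfolding z_def e using assms by (simp add: mult.assoc)
    then have "z = 1" by simp
    then show ?thesis using True zk by simp
  next
    case False
    have "z \<noteq> 1"
    proof
      assume "z = 1"
      then have "cos (2 * pi *  of_int d/of_nat n) = 1" unfolding z_def
        by (metis cis.sel(1) one_complex.sel(1))
      then obtain i :: int where i: "2 * pi *  of_int d/of_nat n = of_int i * 2 * pi"
        using cos_one_2pi_int by blast
      then have "of_int d = (of_int i * of_nat n :: real)" using assms
        by (simp add: field_simps)
      then have "d = i * int n" by (metis of_int_eq_iff of_int_mult of_int_of_nat_eq)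
      then show False using False by simp
    qed
    moreover have "z^n = 1"
    proof -
      have "real n * (2 * pi * of_int d/real n) = 2 * pi * of_int d" using assms by simp
      then show ?thesis unfolding z_def Complex.DeMoivre by (metis cis_multiple_2pi Ints_of_int)
    qed
    ultimately show ?thesis using False zk by (simp add: sum_gp_strict)
  qed
qed

lemma cis_period:
  assumes "n > 0"
  shows "cis (2 * pi * of_int k * of_nat (a mod n) / of_nat n) = cis (2 * pi * of_int k * of_nat a / of_nat n)"
proof -
  have a: "real a = real (a mod n) + real n * real (a div n)"
    by (metis of_nat_add of_nat_mult mod_div_mult_eq add.commute mult.commute)
  have "2 * pi * of_int k * of_nat a / of_nat n
      = 2 * pi * of_int k * of_nat (a mod n) / of_nat n + 2 * pi * of_int (k * int (a div n))"
    using assms unfolding a by (simp add: field_simps)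
  also have "cis \<dots> = cis (2 * pi * of_int k * of_nat (a mod n) / of_nat n)"
    by (simp flip: cis_mult)
  finally show ?thesis by simp
qed

lemma chi_mult:
  assumes "n > 0"
  shows "chi n k (pc_mult n u w) = chi n k u * chi n k w"
proof -
  define c where "c j = cis (2 * pi * of_int k * of_nat j / of_nat n)" for j
  have cpq: "c ((p + q) mod n) = c p * c q" for p q
    unfolding c_def cis_period[OF assms] cis_mult by (simp add: add_divide_distrib algebra_simps)
  have e: "of_real (pc_mult n u w j) * c j = (\<Sum>p<n. \<Sum>q<n.
      if (p + q) mod n = j then of_real (u p * w q) * c j else 0)" if "j < n" for j
  proof -
    have "of_real (pc_mult n u w j) * c j = (\<Sum>p<n. \<Sum>q<n.
      of_real (if (p + q) mod n = j then u p * w q else 0) * c j)"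
      unfolding pc_mult_def using that by (simp add: sum_distrib_right)
    also have "\<dots> = (\<Sum>p<n. \<Sum>q<n.
      if (p + q) mod n = j then of_real (u p * w q) * c j else 0)"
      by (intro sum.cong refl) simp
    finally show ?thesis .
  qed
  have "chi n k (pc_mult n u w) = (\<Sum>j<n. \<Sum>p<n. \<Sum>q<n.
      if (p + q) mod n = j then of_real (u p * w q) * c j else 0)"
    unfolding chi_def c_def[symmetric] using e by (intro sum.cong) auto
  also have "\<dots> = (\<Sum>p<n. \<Sum>j<n. \<Sum>q<n.
      if (p + q) mod n = j then of_real (u p * w q) * c j else 0)"
    by (rule sum.swap)
  also have "\<dots> = (\<Sum>p<n. \<Sum>q<n. \<Sum>j<n.
      if (p + q) mod n = j then of_real (u p * w q) * c j else 0)"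
    by (rule sum.cong[OF refl], rule sum.swap)
  also have "\<dots> = (\<Sum>p<n. \<Sum>q<n. of_real (u p * w q) * c ((p + q) mod n))"
    using assms by (simp add: sum.delta)
  also have "\<dots> = (\<Sum>p<n. \<Sum>q<n. (of_real (u p) * c p) * (of_real (w q) * c q))"
    by (simp add: cpq algebra_simps)
  also have "\<dots> = chi n k u * chi n k w"
    unfolding chi_def c_def by (simp add: sum_product)
  finally show ?thesis .
qed

lemma chi_one: "n > 0 \<Longrightarrow> chi n k (pc_one n) = 1"
  unfolding chi_def pc_one_def
  by (subst sum.cong[OF refl, where h="\<lambda>p. if p = 0 then 1 else 0"]) auto

lemma valid_mult: "pc_valid n (pc_mult n u w)"
  unfolding pc_valid_def pc_mult_def by simp

lemma valid_one: "pc_valid n (pc_one n)"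
  unfolding pc_valid_def pc_one_def by simp

lemma valid_pow: "pc_valid n u \<Longrightarrow> pc_valid n (pc_pow n u i)"
  by (cases i) (simp_all add: valid_mult valid_one)

lemma chi_pow: "n > 0 \<Longrightarrow> chi n k (pc_pow n u i) = chi n k u ^ i"
  by (induction i) (simp_all add: chi_one chi_mult)

lemma dvd_iff_eq:
  assumes "p < n" "j < n"
  shows "int n dvd (int p - int j) \<longleftrightarrow> p = j"
proof
  assume d: "int n dvd (int p - int j)"
  show "p = j"
  proof (rule ccontr)
    assume "p \<noteq> j"
    then have "int p - int j \<noteq> 0" by simp
    from dvd_imp_le_int[OF this d] assms show False by simp
  qed
qed simp

lemma inversion:
  assumes "n > 0" "pc_valid n x" "j < n"
  shows "of_real (x j) = (1 / of_nat n) * (\<Sum>k<n. chi n (int k) x * cis (- (2 * pi * of_nat k * of_nat j / of_nat n)))"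
proof -
  have "(\<Sum>k<n. chi n (int k) x * cis (- (2 * pi * of_nat k * of_nat j / of_nat n)))
      = (\<Sum>k<n. \<Sum>p<n. of_real (x p) * cis (2 * pi * of_nat k * of_int (int p - int j) / of_nat n))"
    unfolding chi_def sum_distrib_right
    by (intro sum.cong refl) (simp add: mult.assoc cis_mult diff_divide_distrib algebra_simps)
  also have "\<dots> = (\<Sum>p<n. of_real (x p) * (\<Sum>k<n. cis (2 * pi * of_nat k * of_int (int p - int j) / of_nat n)))"
    by (subst sum.swap) (simp add: sum_distrib_left)
  also have "\<dots> = (\<Sum>p<n. if p = j then of_real (x p) * of_nat n else 0)"
  proof (intro sum.cong refl)
    fix p assume "p \<in> {..<n}"
    then have "(\<Sum>k<n. cis (2 * pi * of_nat k * of_int (int p - int j) / of_nat n)) = (if p = j then of_nat n else 0)"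
      using orth[OF assms(1), of "int p - int j"] dvd_iff_eq[OF _ assms(3), of p] by simp
    then show "of_real (x p) * (\<Sum>k<n. cis (2 * pi * of_nat k * of_int (int p - int j) / of_nat n)) = (if p = j then of_real (x p) * of_nat n else 0)"
      by simp
  qed
  also have "\<dots> = of_real (x j) * of_nat n" using assms by simp
  finally show ?thesis using assms by simp
qed

lemma uniqueness:
  assumes "n > 0" "pc_valid n x" "pc_valid n y" "\<And>k. k < n \<Longrightarrow> chi n (int k) x = chi n (int k) y"
  shows "x = y"
proof
  fix j
  show "x j = y j"
  proof (cases "j < n")
    case True
    then have "complex_of_real (x j) = of_real (y j)"
      using inversion[OF assms(1,2) True] inversion[OF assms(1,3) True] assms(4) by simp
    then show ?thesis by simp
  next
    case False
    then show ?thesis using assms(2,3) unfolding pc_valid_def by simp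
  qed
qed

lemma forward:
  assumes "n > 0"
  shows "(\<Sum>p<n. ((1 / of_nat n) * (\<Sum>k<n. c k * cis (- (2 * pi * of_nat k * of_nat p / of_nat n))))
            * cis (2 * pi * of_int l * of_nat p / of_nat n)) = c (nat (l mod int n))"
proof -
  have "(\<Sum>p<n. ((1 / of_nat n) * (\<Sum>k<n. c k * cis (- (2 * pi * of_nat k * of_nat p / of_nat n))))
            * cis (2 * pi * of_int l * of_nat p / of_nat n))
      = (1 / of_nat n) * (\<Sum>p<n. \<Sum>k<n. c k * cis (2 * pi * of_nat p * of_int (l - int k) / of_nat n))"
    unfolding sum_distrib_right sum_distrib_left
    by (intro sum.cong refl) (simp add: mult.assoc cis_mult diff_divide_distrib algebra_simps)
  also have "\<dots> = (1 / of_nat n) * (\<Sum>k<n. c k * (\<Sum>p<n. cis (2 * pi * of_nat p * of_int (l - int k) / of_nat n)))"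
    by (subst sum.swap) (simp add: sum_distrib_left)
  also have "\<dots> = (1 / of_nat n) * (\<Sum>k<n. if k = nat (l mod int n) then c k * of_nat n else 0)"
  proof -
    have "int n dvd (l - int k) \<longleftrightarrow> k = nat (l mod int n)" if "k < n" for k
    proof -
      have "int n dvd (l - int k) \<longleftrightarrow> l mod int n = int k mod int n" by (simp add: mod_eq_dvd_iff)
      also have "int k mod int n = int k" using that by simp
      finally show ?thesis using assms by auto
    qed
    note kk = this
    have "c k * (\<Sum>p<n. cis (2 * pi * of_nat p * of_int (l - int k) / of_nat n)) = (if k = nat (l mod int n) then c k * of_nat n else 0)"
      if "k \<in> {..<n}" for k
    proof -
      have "(\<Sum>p<n. cis (2 * pi * of_nat p * of_int (l - int k) / of_nat n)) = (if k = nat (l mod int n) then of_nat n else 0)"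
        using orth[OF assms(1), of "l - int k"] kk[of k] that by simp
      then show ?thesis by simp
    qed
    then show ?thesis by (intro arg_cong[where f="\<lambda>t. (1 / of_nat n) * t"] sum.cong refl)
  qed
  also have "\<dots> = c (nat (l mod int n))"
  proof -
    have "nat (l mod int n) < n" using assms by (simp add: nat_less_iff)
    then show ?thesis using assms by simp
  qed
  finally show ?thesis .
qed

lemma chi_mod:
  assumes "n > 0"
  shows "chi n (k mod int n) x = chi n k x"
  unfolding chi_def
proof (intro sum.cong refl)
  fix p
  have kk: "real_of_int k = real_of_int (k mod int n) + real n * real_of_int (k div int n)"
    by (metis of_int_add of_int_mult of_int_of_nat_eq mod_div_mult_eq add.commute mult.commute)
  have "2 * pi * of_int k * of_nat p / of_nat n
      = 2 * pi * of_int (k mod int n) * of_nat p / of_nat n + 2 * pi * of_int (k div int n * int p)"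
    using assms unfolding kk by (simp add: field_simps)
  then have "cis (2 * pi * of_int k * of_nat p / of_nat n) = cis (2 * pi * of_int (k mod int n) * of_nat p / of_nat n)"
    by (simp flip: cis_mult)
  then show "of_real (x p) * cis (2 * pi * of_int (k mod int n) * of_nat p / of_nat n)
     = of_real (x p) * cis (2 * pi * of_int k * of_nat p / of_nat n)" by simp
qed

lemma chi_neg: "chi n (- k) x = cnj (chi n k x)"
  unfolding chi_def by (simp add: cis_cnj)

lemma chi_nat: "chi n (int k) x = Complex (v_c n k x) (v_s n k x)"
  unfolding chi_def v_c_def v_s_def
  by (simp add: complex_eq_iff Re_sum Im_sum)

lemma chi_zero: "chi n 0 x = of_real (v_plus n x)"
  unfolding chi_def v_plus_def by simp

lemma chi_half:
  assumes "even n" "n > 0"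
  shows "chi n (int (n div 2)) x = of_real (v_minus n x)"
  unfolding chi_def v_minus_def of_real_sum
proof (intro sum.cong refl)
  fix p
  have "2 * pi * of_int (int (n div 2)) * of_nat p / of_nat n = real p * pi"
    using assms by (auto elim!: evenE simp: field_simps)
  then have "cis (2 * pi * of_int (int (n div 2)) * of_nat p / of_nat n) = (-1) ^ p"
    by (simp flip: Complex.DeMoivre)
  then show "of_real (x p) * cis (2 * pi * of_int (int (n div 2)) * of_nat p / of_nat n) = of_real ((-1) ^ p * x p)"
    by simp
qed

definition inv_w :: "nat \<Rightarrow> (nat \<Rightarrow> real) \<Rightarrow> (nat \<Rightarrow> real)" where
  "inv_w n u = (\<lambda>p. if p < n then Re ((1 / of_nat n) * (\<Sum>k<n. inverse (chi n (int k) u)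
       * cis (- (2 * pi * of_nat k * of_nat p / of_nat n)))) else 0)"

lemma chi_inv_w:
  assumes "n > 0"
  shows "chi n l (inv_w n u) = inverse (chi n l u)"
proof -
  define c where "c k = inverse (chi n (int k) u)" for k
  define y where "y p = (1 / of_nat n) * (\<Sum>k<n. c k * cis (- (2 * pi * of_nat k * of_nat p / of_nat n)))" for p
  have cm: "c (nat (l' mod int n)) = inverse (chi n l' u)" for l'
    unfolding c_def using assms by (simp add: chi_mod)
  have f1: "(\<Sum>p<n. y p * cis (2 * pi * of_int l * of_nat p / of_nat n)) = inverse (chi n l u)"
    unfolding y_def forward[OF assms] cm ..
  have f2: "(\<Sum>p<n. y p * cis (2 * pi * of_int (- l) * of_nat p / of_nat n)) = inverse (cnj (chi n l u))"
    unfolding y_def forward[OF assms] cm chi_neg ..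
  have "(\<Sum>p<n. cnj (y p) * cis (2 * pi * of_int l * of_nat p / of_nat n))
      = cnj (\<Sum>p<n. y p * cis (2 * pi * of_int (- l) * of_nat p / of_nat n))"
    by (simp add: cis_cnj)
  also have "\<dots> = cnj (inverse (cnj (chi n l u)))" unfolding f2 ..
  finally have f3: "(\<Sum>p<n. cnj (y p) * cis (2 * pi * of_int l * of_nat p / of_nat n)) = inverse (chi n l u)"
    by simp
  have "chi n l (inv_w n u) = (\<Sum>p<n. ((y p + cnj (y p)) / 2) * cis (2 * pi * of_int l * of_nat p / of_nat n))"
  proof -
    have iw: "inv_w n u p = Re (y p)" if "p < n" for p
      unfolding inv_w_def y_def c_def using that by simp
    show ?thesis unfolding chi_def[of n l "inv_w n u"]
      by (intro sum.cong refl) (simp add: complex_add_cnj iw)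
  qed
  also have "\<dots> = ((\<Sum>p<n. y p * cis (2 * pi * of_int l * of_nat p / of_nat n))
        + (\<Sum>p<n. cnj (y p) * cis (2 * pi * of_int l * of_nat p / of_nat n))) / 2"
    by (simp add: sum_divide_distrib sum.distrib ring_distribs add_divide_distrib)
  also have "\<dots> = inverse (chi n l u)" using f1 f3 by simp
  finally show ?thesis .
qed

lemma pc_inv_props:
  assumes "n > 0" "\<And>k. chi n k u \<noteq> 0"
  shows "pc_valid n (pc_inv n u)" "chi n k (pc_inv n u) = inverse (chi n k u)"
proof -
  have vw: "pc_valid n (inv_w n u)" unfolding pc_valid_def inv_w_def by simp
  have mw: "pc_mult n u (inv_w n u) = pc_one n"
    by (rule uniqueness[OF assms(1) valid_mult valid_one])
       (simp add: chi_mult chi_one chi_inv_w assms)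
  have "pc_inv n u = inv_w n u"
    unfolding pc_inv_def
  proof (rule the_equality)
    show "pc_valid n (inv_w n u) \<and> pc_mult n u (inv_w n u) = pc_one n" using vw mw by simp
  next
    fix w assume w: "pc_valid n w \<and> pc_mult n u w = pc_one n"
    show "w = inv_w n u"
    proof (rule uniqueness[OF assms(1)])
      fix k :: nat
      have "chi n (int k) u * chi n (int k) w = 1"
        using w chi_mult[OF assms(1), of "int k" u w] chi_one[OF assms(1)] by simp
      then show "chi n (int k) w = chi n (int k) (inv_w n u)"
        using assms(2)[of "int k"] by (simp add: chi_inv_w assms(1) field_simps)
    qed (use w vw in auto)
  qed
  then show "pc_valid n (pc_inv n u)" "chi n k (pc_inv n u) = inverse (chi n k u)"
    using vw chi_inv_w[OF assms(1)] by simp_all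
qed

lemma sum_rev_part:
  fixes n h :: nat and g :: "nat \<Rightarrow> real"
  assumes "h < n" "\<And>k. 0 < k \<Longrightarrow> k < n \<Longrightarrow> g (n - k) = g k"
  shows "(\<Sum>k\<in>{n-h..<n}. g k) = (\<Sum>k\<in>{1..h}. (g k :: real))"
  by (rule sum.reindex_bij_witness[of _ "\<lambda>k. n - k" "\<lambda>k. n - k"]) (use assms in \<open>auto simp: less_diff_conv2\<close>)

lemma sum_split:
  fixes n :: nat and g :: "nat \<Rightarrow> real"
  assumes "n \<ge> 2" "\<And>k. 0 < k \<Longrightarrow> k < n \<Longrightarrow> g (n - k) = g k"
  shows "(\<Sum>k<n. g k) = g 0 + 2 * (\<Sum>k=1..(n-1) div 2. g k) + (if even n then g (n div 2) else (0::real))"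
proof -
  define h where "h = (n - 1) div 2"
  have hn: "h < n" unfolding h_def using assms by auto
  have "(\<Sum>k<n. g k) = (\<Sum>k\<in>{0..<n}. g k)" by (simp add: lessThan_atLeast0)
  also have "\<dots> = g 0 + (\<Sum>k\<in>{1..<n}. g k)"
    using assms by (subst sum.atLeast_Suc_lessThan) auto
  also have "(\<Sum>k\<in>{1..<n}. g k) = (\<Sum>k\<in>{1..<h+1}. g k) + (\<Sum>k\<in>{h+1..<n}. g k)"
    using hn by (subst sum.atLeastLessThan_concat) auto
  also have "(\<Sum>k\<in>{h+1..<n}. g k) = (if even n then g (n div 2) else 0) + (\<Sum>k\<in>{n-h..<n}. g k)"
  proof (cases "even n")
    case True
    then have "h + 1 = n div 2" "n - h = Suc (n div 2)" unfolding h_def using assms by (auto elim!: evenE)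
    then show ?thesis using True hn by (simp add: sum.atLeast_Suc_lessThan)
  next
    case False
    then have "h + 1 = n - h" unfolding h_def using assms by (auto elim!: oddE)
    then show ?thesis using False by simp
  qed
  also have "(\<Sum>k\<in>{n-h..<n}. g k) = (\<Sum>k\<in>{1..h}. g k)"
    by (rule sum_rev_part[where g=g, OF hn assms(2)])
  also have "{1..<h+1} = {1..h}" by auto
  finally show ?thesis unfolding h_def by simp
qed

lemma chi_ipow:
  assumes "n > 0" "pc_valid n u" "m < 0 \<Longrightarrow> (\<forall>k. chi n k u \<noteq> 0)"
  shows "pc_valid n (pc_ipow n u m) \<and> chi n k (pc_ipow n u m) = chi n k u powi m"
proof (cases "0 \<le> m")
  case True
  then show ?thesis using assms valid_pow[OF assms(2)]
    by (simp add: pc_ipow_def chi_pow power_int_def)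
next
  case False
  then have nz: "\<And>k. chi n k u \<noteq> 0" using assms(3) by simp
  show ?thesis using False pc_inv_props[OF assms(1) nz] valid_pow[of n "pc_inv n u"]
    by (simp add: pc_ipow_def chi_pow[OF assms(1)] power_int_def)
qed

lemma chi_nonzero:
  assumes "n \<ge> 2" "v_plus n u \<noteq> 0" "even n \<longrightarrow> v_minus n u \<noteq> 0"
    "\<forall>k. 1 \<le> k \<and> k \<le> (n - 1) div 2 \<longrightarrow> rho n k u \<noteq> 0"
  shows "chi n k u \<noteq> 0"
proof -
  have n0: "n > 0" using assms by simp
  define k' where "k' = nat (k mod int n)"
  have k'n: "k' < n" unfolding k'_def using n0 by (simp add: nat_less_iff)
  have ck: "chi n k u = chi n (int k') u" unfolding k'_def using n0 by (simp add: chi_mod)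
  have small: "chi n (int k'') u \<noteq> 0" if "1 \<le> k''" "k'' \<le> (n - 1) div 2" for k''
  proof
    assume "chi n (int k'') u = 0"
    then have "v_c n k'' u = 0" "v_s n k'' u = 0" by (simp_all add: chi_nat complex_eq_iff)
    then have "rho n k'' u = 0" unfolding rho_def by simp
    then show False using assms(4) that by auto
  qed
  have "k' = 0 \<or> (1 \<le> k' \<and> k' \<le> (n - 1) div 2) \<or> (even n \<and> k' = n div 2)
     \<or> (1 \<le> n - k' \<and> n - k' \<le> (n - 1) div 2)"
  proof (cases "even n")
    case True
    then obtain q where q: "n = 2 * q" by (auto elim!: evenE)
    then have "(n - 1) div 2 = q - 1" "n div 2 = q" using assms(1) by (simp_all add: nat_mult_div_cancel_disj)
    then show ?thesis using k'n q True by auto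
  next
    case False
    then obtain q where q: "n = 2 * q + 1" by (auto elim!: oddE)
    then have "(n - 1) div 2 = q" by simp
    then show ?thesis using k'n q False by auto
  qed
  then consider "k' = 0" | "1 \<le> k' \<and> k' \<le> (n - 1) div 2" | "even n \<and> k' = n div 2"
     | "1 \<le> n - k' \<and> n - k' \<le> (n - 1) div 2" by blast
  then show ?thesis
  proof cases
    case 1 then show ?thesis using ck assms(2) by (simp add: chi_zero)
  next
    case 2 then show ?thesis using ck small by simp
  next
    case 3 then show ?thesis using ck assms(3) n0 chi_half[of n u] by simp
  next
    case 4
    have "(int k' - int n) mod int n = int k'" using k'n by simp
    then have "chi n (int k') u = chi n (- int (n - k')) u"
      using chi_mod[OF n0, of "int k' - int n" u] k'n by (simp add: of_nat_diff)
    then have "chi n (int k') u = cnj (chi n (int (n - k')) u)" by (simp add: chi_neg)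
    then show ?thesis using ck small[of "n - k'"] 4 by simp
  qed
qed

lemma rcis_powi: "(rcis r a) powi m = rcis (r powi m) (of_int m * a)"
  by (simp add: rcis_def power_int_mult_distrib cis_power_int)

theorem mainTheorem11:
  fixes n :: nat and u :: "nat \<Rightarrow> real" and m :: int
  assumes "n \<ge> 2"
    and "pc_valid n u"
    and "m \<le> 0 \<longrightarrow> v_plus n u \<noteq> 0 \<and> (even n \<longrightarrow> v_minus n u \<noteq> 0) \<and>
           (\<forall>k. 1 \<le> k \<and> k \<le> (n - 1) div 2 \<longrightarrow> rho n k u \<noteq> 0)"
  shows "(even n \<longrightarrow> pc_ipow n u m = (\<lambda>j.
            e_plus n j * v_plus n u powi m + e_minus n j * v_minus n u powi m
          + (\<Sum>k = 1..n div 2 - 1. rho n k u powi m *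
               (e_c n k j * cos (real_of_int m * phi n k u)
                + e_s n k j * sin (real_of_int m * phi n k u)))))
       \<and> (odd n \<longrightarrow> pc_ipow n u m = (\<lambda>j.
            e_plus n j * v_plus n u powi m
          + (\<Sum>k = 1..(n - 1) div 2. rho n k u powi m *
               (e_c n k j * cos (real_of_int m * phi n k u)
                + e_s n k j * sin (real_of_int m * phi n k u)))))"
proof -
  have n0: "n > 0" using assms(1) by simp
  have nz: "\<forall>k. chi n k u \<noteq> 0" if "m < 0"
    using assms(3) that chi_nonzero[OF assms(1)] by auto
  define w where "w = pc_ipow n u m"
  have vw: "pc_valid n w" and chw: "\<And>k. chi n k w = chi n k u powi m"
    unfolding w_def using chi_ipow[OF n0 assms(2) nz] by auto
  define th where "th j k = 2 * pi * real k * real j / real n" for j k :: nat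
  define g where "g j k = Re (chi n (int k) u powi m * cis (- th j k))" for j k
  have wj: "w j = (1 / real n) * (\<Sum>k<n. g j k)" if "j < n" for j
  proof -
    have "complex_of_real (w j) = (1 / of_nat n) * (\<Sum>k<n. chi n (int k) u powi m * cis (- th j k))"
      using inversion[OF n0 vw that] unfolding chw th_def by simp
    then have "Re (complex_of_real (w j)) = Re ((1 / of_nat n) * (\<Sum>k<n. chi n (int k) u powi m * cis (- th j k)))"
      by simp
    then show ?thesis unfolding g_def by (simp add: Re_sum)
  qed
  have gsym: "g j (n - k) = g j k" if "0 < k" "k < n" for j k
  proof -
    have "(- int k) mod int n = int (n - k)" using that
      by (simp add: of_nat_diff zmod_zminus1_eq_if)
    then have c1: "chi n (int (n - k)) u = cnj (chi n (int k) u)"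
      using chi_mod[OF n0, of "- int k" u] by (simp add: chi_neg)
    have "- th j (n - k) = th j k + 2 * pi * of_int (- int j)"
      unfolding th_def using that n0 by (simp add: of_nat_diff field_simps)
    then have "cis (- th j (n - k)) = cis (th j k) * cis (2 * pi * of_int (- int j))"
      by (simp only: cis_mult)
    also have "cis (2 * pi * of_int (- int j)) = 1" by (rule cis_multiple_2pi) simp
    finally have c2: "cis (- th j (n - k)) = cnj (cis (- th j k))"
      by (simp add: cis_cnj)
    show ?thesis unfolding g_def c1 c2
      by (metis complex_cnj_mult complex_cnj_power_int cnj.sel(1))
  qed
  have g0: "g j 0 = v_plus n u powi m" for j
  proof -
    have e: "chi n 0 u powi m = of_real (v_plus n u powi m)" by (simp add: chi_zero)
    show ?thesis unfolding g_def th_def by (simp del: of_real_power_int add: e)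
  qed
  have ghalf: "g j (n div 2) = v_minus n u powi m * (-1) ^ j" if "even n" for j
  proof -
    have "chi n (int (n div 2)) u powi m = of_real (v_minus n u powi m)" by (simp add: chi_half[OF that n0])
    moreover have "- th j (n div 2) = - (real j * pi)"
      unfolding th_def using that n0 by (auto elim!: evenE simp: field_simps)
    moreover have "cis (- (real j * pi)) = (-1) ^ j"
      by (simp flip: Complex.DeMoivre cis_inverse add: power_inverse[symmetric])
    ultimately show ?thesis unfolding g_def by (simp del: of_real_power_int)
  qed
  have gk: "g j k = rho n k u powi m * (cos (real_of_int m * phi n k u) * cos (th j k)
       + sin (real_of_int m * phi n k u) * sin (th j k))" for j k
  proof -
    have "chi n (int k) u = rcis (rho n k u) (phi n k u)"
      unfolding chi_nat rho_def phi_def by (metis rcis_cmod_Arg complex_norm)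
    then have "chi n (int k) u powi m * cis (- th j k)
        = rcis (rho n k u powi m) (real_of_int m * phi n k u - th j k)"
      by (simp add: rcis_powi cis_rcis_eq rcis_mult)
    then show ?thesis unfolding g_def by (simp add: cos_diff)
  qed
  have split: "(\<Sum>k<n. g j k) = g j 0 + 2 * (\<Sum>k=1..(n-1) div 2. g j k)
      + (if even n then g j (n div 2) else 0)" for j
    by (rule sum_split[OF assms(1)]) (simp add: gsym)
  have sumeq: "(\<Sum>k=1..(n-1) div 2. rho n k u powi m *
               (e_c n k j * cos (real_of_int m * phi n k u)
                + e_s n k j * sin (real_of_int m * phi n k u)))
       = (if j < n then 2 / real n * (\<Sum>k=1..(n-1) div 2. g j k) else 0)" for j
    unfolding e_c_def e_s_def gk th_def sum_distrib_left
    by (auto intro!: sum.cong simp: algebra_simps)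
  have hh: "n div 2 - 1 = (n - 1) div 2" if "even n" using that by (auto elim!: evenE)
  show ?thesis
  proof (intro conjI impI)
    assume ev: "even n"
    show "pc_ipow n u m = (\<lambda>j.
            e_plus n j * v_plus n u powi m + e_minus n j * v_minus n u powi m
          + (\<Sum>k = 1..n div 2 - 1. rho n k u powi m *
               (e_c n k j * cos (real_of_int m * phi n k u)
                + e_s n k j * sin (real_of_int m * phi n k u))))"
    proof
      fix j
      show "pc_ipow n u m j = e_plus n j * v_plus n u powi m + e_minus n j * v_minus n u powi m
          + (\<Sum>k = 1..n div 2 - 1. rho n k u powi m *
               (e_c n k j * cos (real_of_int m * phi n k u)
                + e_s n k j * sin (real_of_int m * phi n k u)))"
      proof (cases "j < n")
        case True
        then show ?thesis unfolding w_def[symmetric] hh[OF ev] sumeq wj[OF True] split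
          using ev by (simp add: e_plus_def e_minus_def g0 ghalf field_simps)
      next
        case False
        then show ?thesis using vw unfolding w_def[symmetric] hh[OF ev] sumeq pc_valid_def
          by (simp add: e_plus_def e_minus_def)
      qed
    qed
  next
    assume od: "odd n"
    show "pc_ipow n u m = (\<lambda>j.
            e_plus n j * v_plus n u powi m
          + (\<Sum>k = 1..(n - 1) div 2. rho n k u powi m *
               (e_c n k j * cos (real_of_int m * phi n k u)
                + e_s n k j * sin (real_of_int m * phi n k u))))"
    proof
      fix j
      show "pc_ipow n u m j = e_plus n j * v_plus n u powi m
          + (\<Sum>k = 1..(n - 1) div 2. rho n k u powi m *
               (e_c n k j * cos (real_of_int m * phi n k u)
                + e_s n k j * sin (real_of_int m * phi n k u)))"
      proof (cases "j < n")
        case True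
        then show ?thesis unfolding w_def[symmetric] sumeq wj[OF True] split
          using od by (simp add: e_plus_def g0 field_simps)
      next
        case False
        then show ?thesis using vw unfolding w_def[symmetric] sumeq pc_valid_def
          by (simp add: e_plus_def)
      qed
    qed
  qed
qed

end
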